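(* Assume (A3). Then, almost surely in $X_1,\dots,X_n$, for every $\delta>0$, $$\mathbb E_\varepsilon\Big[\sup_{f\in\mathcal F_b,\ \mathbb E_n[\xi_f^2(X)]\le\delta}\frac1n\sum_{i=1}^n\varepsilon_i\xi_f(X_i)\Big]\le\sqrt{10}\,(\|f_{\mathcal H}\|_K\vee1)\,\widehat R_x(\delta).$$
   Context: $\mathcal Z\subseteq\mathbb R^r$, $\mathcal X\subseteq\mathbb R^p$; $Z$ random in $\mathcal Z$ with law $\rho$, $\mathcal L^2(\rho)$ with $\langle\cdot,\cdot\rangle_\rho$; $K$ a kernel on $\mathcal Z$ with RKHS $\mathcal H_K$ and norm $\|\cdot\|_K$; $f_{\mathcal H}\in\mathcal H_K$ fixed. (A3) $L_Kf=\int K(z,\cdot)f(z)d\rho(z)=\sum_j\mu_j\langle\phi_j,f\rangle_\rho\phi_j$ with nonincreasing $\mu_j\ge0$, $\mu_1>0$, $\{\phi_j\}$ orthonormal basis of $\mathcal L^2(\rho)$. $\widehat g:\mathcal X\to\mathcal Z$ fixed measurable; $X_1,\dots,X_n$ points of $\mathcal X$; $\mathbb E_n[F(X)]=\frac1n\sum_iF(X_i)$. $\mathcal F_b=\{f\in\mathcal H_K:\|f-f_{\mathcal H}\|_K\le3\|f_{\mathcal H}\|_K\}$; $\xi_f(x)=f(\widehat g(x))-f_{\mathcal H}(\widehat g(x))$. $\varepsilon_1,\dots,\varepsilon_n$ are i.i.d. Rademacher signs and $\mathbb E_\varepsilon$ is expectation over them only. $\mathbf K_x$ is the $n\times n$ matrix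 with entries $n^{-1}K(\widehat g(X_i),\widehat g(X_j))$, eigenvalues $\widehat\mu_{x,1}\ge\dots\ge\widehat\mu_{x,n}$, and $\widehat R_x(\delta)=(\frac1n\sum_{j=1}^n\min\{\delta,\widehat\mu_{x,j}\})^{1/2}$. *)

theory Defs
  imports "HOL-Probability.Probability" "Jordan_Normal_Form.Char_Poly"
begin

definition psd_kernel :: "'z set \<Rightarrow> ('z \<Rightarrow> 'z \<Rightarrow> real) \<Rightarrow> bool" where
  "psd_kernel Zs K \<longleftrightarrow> (\<forall>z\<in>Zs. \<forall>w\<in>Zs. K z w = K w z) \<and>
     (\<forall>(m::nat) (zs::nat \<Rightarrow> 'z) (c::nat \<Rightarrow> real). (\<forall>i<m. zs i \<in> Zs) \<longrightarrow>
        0 \<le> (\<Sum>i<m. \<Sum>j<m. c i * c j * K (zs i) (zs j)))"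

definition ksec :: "'z set \<Rightarrow> ('z \<Rightarrow> 'z \<Rightarrow> real) \<Rightarrow> 'z \<Rightarrow> 'z \<Rightarrow> real" where
  "ksec Zs K z = (\<lambda>w. if w \<in> Zs then K z w else 0)"

definition rkhs :: "'z set \<Rightarrow> ('z \<Rightarrow> 'z \<Rightarrow> real) \<Rightarrow> ('z \<Rightarrow> real) set
    \<Rightarrow> (('z \<Rightarrow> real) \<Rightarrow> ('z \<Rightarrow> real) \<Rightarrow> real) \<Rightarrow> bool" where
  "rkhs Zs K H ip \<longleftrightarrow>
     (\<forall>f\<in>H. \<forall>z. z \<notin> Zs \<longrightarrow> f z = 0) \<and>
     (\<lambda>z. 0) \<in> H \<and> (\<forall>f\<in>H. \<forall>g\<in>H. (\<lambda>z. f z + g z) \<in> H) \<and> (\<forall>f\<in>H. \<forall>a::real. (\<lambda>z. a * f z) \<in> H) \<and>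
     (\<forall>f\<in>H. \<forall>g\<in>H. ip f g = ip g f) \<and>
     (\<forall>f\<in>H. \<forall>g\<in>H. \<forall>h\<in>H. ip (\<lambda>z. f z + g z) h = ip f h + ip g h) \<and>
     (\<forall>f\<in>H. \<forall>g\<in>H. \<forall>a::real. ip (\<lambda>z. a * f z) g = a * ip f g) \<and>
     (\<forall>f\<in>H. 0 \<le> ip f f) \<and> (\<forall>f\<in>H. ip f f = 0 \<longrightarrow> f = (\<lambda>z. 0)) \<and>
     (\<forall>s::nat \<Rightarrow> 'z \<Rightarrow> real. (\<forall>m. s m \<in> H) \<longrightarrow>
        (\<forall>e>0. \<exists>N. \<forall>m\<ge>N. \<forall>k\<ge>N. ip (\<lambda>z. s m z - s k z) (\<lambda>z. s m z - s k z) < e) \<longrightarrow>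
        (\<exists>f\<in>H. (\<lambda>m. ip (\<lambda>z. s m z - f z) (\<lambda>z. s m z - f z)) \<longlonglongrightarrow> 0)) \<and>
     (\<forall>z\<in>Zs. ksec Zs K z \<in> H) \<and>
     (\<forall>f\<in>H. \<forall>z\<in>Zs. ip f (ksec Zs K z) = f z)"

definition rk_norm :: "(('z \<Rightarrow> real) \<Rightarrow> ('z \<Rightarrow> real) \<Rightarrow> real) \<Rightarrow> ('z \<Rightarrow> real) \<Rightarrow> real" where
  "rk_norm ip f = sqrt (ip f f)"

definition L2 :: "'z measure \<Rightarrow> ('z \<Rightarrow> real) set" where
  "L2 \<rho> = {f. f \<in> borel_measurable \<rho> \<and> integrable \<rho> (\<lambda>z. (f z)\<^sup>2)}"

definition l2ip :: "'z measure \<Rightarrow> ('z \<Rightarrow> real) \<Rightarrow> ('z \<Rightarrow> real) \<Rightarrow> real" where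
  "l2ip \<rho> f g = (\<integral>z. f z * g z \<partial>\<rho>)"

definition LK :: "'z measure \<Rightarrow> ('z \<Rightarrow> 'z \<Rightarrow> real) \<Rightarrow> ('z \<Rightarrow> real) \<Rightarrow> 'z \<Rightarrow> real" where
  "LK \<rho> K f = (\<lambda>w. \<integral>z. K z w * f z \<partial>\<rho>)"

text \<open>The index set J is {1,2,...} or an initial segment {1..N} (finite-dimensional L2).\<close>
definition assumption_A3 :: "'z measure \<Rightarrow> ('z \<Rightarrow> 'z \<Rightarrow> real) \<Rightarrow> nat set
    \<Rightarrow> (nat \<Rightarrow> real) \<Rightarrow> (nat \<Rightarrow> 'z \<Rightarrow> real) \<Rightarrow> bool" where
  "assumption_A3 \<rho> K J \<mu> \<phi> \<longleftrightarrow>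
     1 \<in> J \<and> (\<forall>j\<in>J. 1 \<le> j) \<and> (\<forall>j\<in>J. \<forall>i. 1 \<le> i \<and> i \<le> j \<longrightarrow> i \<in> J) \<and>
     (\<forall>i\<in>J. \<forall>j\<in>J. i \<le> j \<longrightarrow> \<mu> j \<le> \<mu> i) \<and> (\<forall>j\<in>J. 0 \<le> \<mu> j) \<and> 0 < \<mu> 1 \<and>
     (\<forall>j\<in>J. \<phi> j \<in> L2 \<rho>) \<and>
     (\<forall>i\<in>J. \<forall>j\<in>J. l2ip \<rho> (\<phi> i) (\<phi> j) = (if i = j then 1 else 0)) \<and>
     (\<forall>f\<in>L2 \<rho>. (\<lambda>N. \<integral>z. (f z - (\<Sum>j\<in>{j\<in>J. j \<le> N}. l2ip \<rho> (\<phi> j) f * \<phi> j z))\<^sup>2 \<partial>\<rho>)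
                   \<longlonglongrightarrow> 0) \<and>
     (\<forall>f\<in>L2 \<rho>. (\<forall>w\<in>space \<rho>. integrable \<rho> (\<lambda>z. K z w * f z)) \<and> LK \<rho> K f \<in> L2 \<rho> \<and>
        (\<lambda>N. \<integral>z. (LK \<rho> K f z - (\<Sum>j\<in>{j\<in>J. j \<le> N}. \<mu> j * l2ip \<rho> (\<phi> j) f * \<phi> j z))\<^sup>2 \<partial>\<rho>)
          \<longlonglongrightarrow> 0)"

definition gram_mat :: "('z \<Rightarrow> 'z \<Rightarrow> real) \<Rightarrow> ('x \<Rightarrow> 'z) \<Rightarrow> (nat \<Rightarrow> 'x) \<Rightarrow> nat \<Rightarrow> real Matrix.mat" where
  "gram_mat K g X n = Matrix.mat n n (\<lambda>(i, j). K (g (X i)) (g (X j)) / real n)"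

text \<open>Eigenvalues (with algebraic multiplicity) in nonincreasing order: the roots of
  the characteristic polynomial listed decreasingly.\<close>
definition sorted_eigs :: "real Matrix.mat \<Rightarrow> real list" where
  "sorted_eigs A = (SOME es. sorted_wrt (\<ge>) es \<and> char_poly A = (\<Prod>e\<leftarrow>es. [:- e, 1:]))"

definition Rhat :: "('z \<Rightarrow> 'z \<Rightarrow> real) \<Rightarrow> ('x \<Rightarrow> 'z) \<Rightarrow> (nat \<Rightarrow> 'x) \<Rightarrow> nat \<Rightarrow> real \<Rightarrow> real" where
  "Rhat K g X n \<delta> = sqrt ((1 / real n) * (\<Sum>j<n. min \<delta> (sorted_eigs (gram_mat K g X n) ! j)))"

definition rademacher_exp :: "nat \<Rightarrow> ((nat \<Rightarrow> real) \<Rightarrow> real) \<Rightarrow> real" where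
  "rademacher_exp n S = (\<Sum>\<epsilon>\<in>PiE {..<n} (\<lambda>_. {-1, 1}). S \<epsilon>) / 2 ^ n"

end

theory Submission
  imports Defs
begin

lemma cplx_eigvec:
  fixes A :: "nat \<Rightarrow> nat \<Rightarrow> real"
  assumes N: "0 < N"
  shows "\<exists>v a. (\<exists>i<N. v i \<noteq> 0) \<and> (\<forall>i<N. (\<Sum>j<N. complex_of_real (A i j) * v j) = a * v i)"
proof -
  define M where "M = Matrix.mat N N (\<lambda>(i,j). complex_of_real (A i j))"
  have Mc: "M \<in> carrier_mat N N" unfolding M_def by simp
  from char_poly_factorized[OF Mc] obtain as where
    cp: "char_poly M = (\<Prod>a\<leftarrow>as. [:- a, 1:])" and len: "length as = N" by blast
  from len N obtain a as' where as: "as = a # as'" by (cases as) auto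
  have "poly (char_poly M) a = 0" unfolding cp as by simp
  then have "eigenvalue M a" using eigenvalue_root_char_poly[OF Mc] by simp
  then obtain v where ev: "eigenvector M v a" unfolding eigenvalue_def by blast
  then have vc: "v \<in> carrier_vec N" and v0: "v \<noteq> 0\<^sub>v N" and Mv: "M *\<^sub>v v = a \<cdot>\<^sub>v v"
    unfolding eigenvector_def using Mc by auto
  have nz: "\<exists>i<N. v $ i \<noteq> 0"
  proof (rule ccontr)
    assume "\<not> ?thesis"
    then have "v = 0\<^sub>v N" using vc by (intro eq_vecI) auto
    with v0 show False by simp
  qed
  have "\<forall>i<N. (\<Sum>j<N. complex_of_real (A i j) * v $ j) = a * v $ i"
  proof (intro allI impI)
    fix i assume i: "i < N"
    have "(M *\<^sub>v v) $ i = (a \<cdot>\<^sub>v v) $ i" using Mv by simp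
    then show "(\<Sum>j<N. complex_of_real (A i j) * v $ j) = a * v $ i"
      using i vc unfolding M_def by (auto simp: scalar_prod_def atLeast0LessThan)
  qed
  with nz show ?thesis by blast
qed

lemma real_eigvec:
  fixes A :: "nat \<Rightarrow> nat \<Rightarrow> real"
  assumes N: "0 < N" and sym: "\<forall>i<N. \<forall>j<N. A i j = A j i"
  shows "\<exists>y \<mu>. (\<Sum>i<N. (y i)\<^sup>2) = 1 \<and> (\<forall>i<N. (\<Sum>j<N. A i j * y j) = \<mu> * y i)"
proof -
  obtain v a where nz: "\<exists>i<N. v i \<noteq> 0"
    and ev: "\<forall>i<N. (\<Sum>j<N. complex_of_real (A i j) * v j) = a * v i"
    using cplx_eigvec[OF N, of A] by blast
  define x where "x j = Re (v j)" for j
  define y where "y j = Im (v j)" for j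
  define \<alpha> where "\<alpha> = Re a"
  define \<beta> where "\<beta> = Im a"
  have ex: "(\<Sum>j<N. A i j * x j) = \<alpha> * x i - \<beta> * y i" if i: "i < N" for i
  proof -
    have "Re (\<Sum>j<N. complex_of_real (A i j) * v j) = Re (a * v i)" using ev i by simp
    then show ?thesis by (simp add: Re_sum x_def y_def \<alpha>_def \<beta>_def)
  qed
  have ey: "(\<Sum>j<N. A i j * y j) = \<beta> * x i + \<alpha> * y i" if i: "i < N" for i
  proof -
    have "Im (\<Sum>j<N. complex_of_real (A i j) * v j) = Im (a * v i)" using ev i by simp
    then show ?thesis by (simp add: Im_sum x_def y_def \<alpha>_def \<beta>_def algebra_simps)
  qed
  have symsum: "(\<Sum>i<N. x i * (\<Sum>j<N. A i j * y j)) = (\<Sum>i<N. y i * (\<Sum>j<N. A i j * x j))"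
  proof -
    have "(\<Sum>i<N. x i * (\<Sum>j<N. A i j * y j)) = (\<Sum>i<N. \<Sum>j<N. x i * A i j * y j)"
      by (simp add: sum_distrib_left mult.assoc)
    also have "\<dots> = (\<Sum>j<N. \<Sum>i<N. x i * A i j * y j)" by (rule sum.swap)
    also have "\<dots> = (\<Sum>j<N. \<Sum>i<N. y j * A j i * x i)"
      using sym by (intro sum.cong refl) (auto simp: mult_ac)
    also have "\<dots> = (\<Sum>i<N. y i * (\<Sum>j<N. A i j * x j))"
      by (simp add: sum_distrib_left mult.assoc)
    finally show ?thesis .
  qed
  have "(\<Sum>i<N. x i * (\<Sum>j<N. A i j * y j)) = (\<Sum>i<N. \<beta> * (x i)\<^sup>2 + \<alpha> * x i * y i)"
    by (intro sum.cong refl, simp only: lessThan_iff ey) (simp add: power2_eq_square algebra_simps)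
  moreover have "(\<Sum>i<N. y i * (\<Sum>j<N. A i j * x j)) = (\<Sum>i<N. \<alpha> * x i * y i - \<beta> * (y i)\<^sup>2)"
    by (intro sum.cong refl, simp only: lessThan_iff ex) (simp add: power2_eq_square algebra_simps)
  ultimately have "(\<Sum>i<N. \<beta> * (x i)\<^sup>2 + \<alpha> * x i * y i) = (\<Sum>i<N. \<alpha> * x i * y i - \<beta> * (y i)\<^sup>2)"
    using symsum by simp
  then have "\<beta> * (\<Sum>i<N. (x i)\<^sup>2 + (y i)\<^sup>2) = 0"
    by (simp add: sum.distrib sum_subtractf sum_distrib_left algebra_simps)
  moreover have "(\<Sum>i<N. (x i)\<^sup>2 + (y i)\<^sup>2) > 0"
  proof -
    from nz obtain i where i: "i < N" "v i \<noteq> 0" by blast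
    then have "x i \<noteq> 0 \<or> y i \<noteq> 0" unfolding x_def y_def using complex_eqI by force
    then have "(x i)\<^sup>2 + (y i)\<^sup>2 > 0" by (simp add: add_pos_nonneg sum_power2_gt_zero_iff)
    moreover have "(x i)\<^sup>2 + (y i)\<^sup>2 \<le> (\<Sum>i<N. (x i)\<^sup>2 + (y i)\<^sup>2)"
      using i by (intro member_le_sum) auto
    ultimately show ?thesis by linarith
  qed
  ultimately have b0: "\<beta> = 0" by simp
  have exr: "\<forall>i<N. (\<Sum>j<N. A i j * x j) = \<alpha> * x i" using ex b0 by simp
  have eyr: "\<forall>i<N. (\<Sum>j<N. A i j * y j) = \<alpha> * y i" using ey b0 by simp
  have gen: "\<exists>y \<mu>. (\<Sum>i<N. (y i)\<^sup>2) = 1 \<and> (\<forall>i<N. (\<Sum>j<N. A i j * y j) = \<mu> * y i)"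
    if w: "\<forall>i<N. (\<Sum>j<N. A i j * w j) = \<alpha> * w i" and wnz: "\<exists>i<N. w i \<noteq> 0" for w
  proof -
    define s where "s = (\<Sum>i<N. (w i)\<^sup>2)"
    have "s > 0"
    proof -
      from wnz obtain i where i: "i < N" "w i \<noteq> 0" by blast
      have "(w i)\<^sup>2 \<le> s" unfolding s_def using i by (intro member_le_sum) auto
      moreover have "(w i)\<^sup>2 > 0" using i by simp
      ultimately show ?thesis by linarith
    qed
    define u where "u i = w i / sqrt s" for i
    have "(\<Sum>i<N. (u i)\<^sup>2) = (\<Sum>i<N. (w i)\<^sup>2) / s"
      using \<open>s > 0\<close> by (simp add: u_def power_divide sum_divide_distrib)
    also have "\<dots> = 1" using \<open>s > 0\<close> s_def by simp
    finally have "(\<Sum>i<N. (u i)\<^sup>2) = 1" .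
    moreover have "\<forall>i<N. (\<Sum>j<N. A i j * u j) = \<alpha> * u i"
    proof (intro allI impI)
      fix i assume "i < N"
      have "(\<Sum>j<N. A i j * u j) = (\<Sum>j<N. A i j * w j) / sqrt s"
        by (simp add: u_def sum_divide_distrib)
      then show "(\<Sum>j<N. A i j * u j) = \<alpha> * u i" using w \<open>i < N\<close> by (simp add: u_def)
    qed
    ultimately show ?thesis by blast
  qed
  from nz obtain i where i: "i < N" "v i \<noteq> 0" by blast
  then have "x i \<noteq> 0 \<or> y i \<noteq> 0" unfolding x_def y_def using complex_eqI by force
  then show ?thesis using gen[OF exr] gen[OF eyr] i by blast
qed


definition orthU :: "nat \<Rightarrow> (nat \<Rightarrow> nat \<Rightarrow> real) \<Rightarrow> bool" where
  "orthU n U \<longleftrightarrow> (\<forall>i<n. \<forall>k<n. (\<Sum>j<n. U i j * U k j) = (if i = k then 1 else 0)) \<and>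
     (\<forall>j<n. \<forall>l<n. (\<Sum>i<n. U i j * U i l) = (if j = l then 1 else 0))"

lemma sum_delta_r: "l < (n::nat) \<Longrightarrow> (\<Sum>r<n. f r * (if l = r then 1 else 0)) = (f l :: real)"
proof -
  assume "l < n"
  have "(\<Sum>r<n. f r * (if l = r then 1 else 0)) = (\<Sum>r<n. if l = r then f r else 0)"
    by (intro sum.cong) auto
  then show ?thesis using \<open>l < n\<close> sum.delta'[of "{..<n}" l f] by simp
qed

lemma sum_delta_l: "l < (n::nat) \<Longrightarrow> (\<Sum>r<n. (if l = r then 1 else 0) * f r) = (f l :: real)"
  using sum_delta_r[of l n f] by (simp add: mult.commute)

lemma orth_mult:
  assumes P: "orthU n P" and Q: "orthU n Q"
  shows "orthU n (\<lambda>i j. \<Sum>l<n. P i l * Q l j)"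
proof -
  have rows: "(\<Sum>j<n. (\<Sum>l<n. P i l * Q l j) * (\<Sum>r<n. P k r * Q r j)) = (if i = k then 1 else 0)"
    if i: "i < n" and k: "k < n" for i k
  proof -
    have "(\<Sum>j<n. (\<Sum>l<n. P i l * Q l j) * (\<Sum>r<n. P k r * Q r j))
        = (\<Sum>j<n. \<Sum>l<n. \<Sum>r<n. P i l * P k r * (Q l j * Q r j))"
      by (simp add: sum_product mult_ac)
    also have "\<dots> = (\<Sum>l<n. \<Sum>r<n. \<Sum>j<n. P i l * P k r * (Q l j * Q r j))"
      by (subst sum.swap, rule sum.cong[OF refl], rule sum.swap)
    also have "\<dots> = (\<Sum>l<n. \<Sum>r<n. P i l * P k r * (if l = r then 1 else 0))"
      using Q unfolding orthU_def by (simp add: sum_distrib_left[symmetric])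
    also have "\<dots> = (\<Sum>l<n. P i l * P k l)"
      by (intro sum.cong refl) (simp add: sum_delta_r)
    also have "\<dots> = (if i = k then 1 else 0)" using P i k unfolding orthU_def by simp
    finally show ?thesis .
  qed
  have cols: "(\<Sum>i<n. (\<Sum>l<n. P i l * Q l j) * (\<Sum>r<n. P i r * Q r k)) = (if j = k then 1 else 0)"
    if j: "j < n" and k: "k < n" for j k
  proof -
    have "(\<Sum>i<n. (\<Sum>l<n. P i l * Q l j) * (\<Sum>r<n. P i r * Q r k))
        = (\<Sum>i<n. \<Sum>l<n. \<Sum>r<n. Q l j * Q r k * (P i l * P i r))"
      by (simp add: sum_product mult_ac)
    also have "\<dots> = (\<Sum>l<n. \<Sum>r<n. \<Sum>i<n. Q l j * Q r k * (P i l * P i r))"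
      by (subst sum.swap, rule sum.cong[OF refl], rule sum.swap)
    also have "\<dots> = (\<Sum>l<n. \<Sum>r<n. Q l j * Q r k * (if l = r then 1 else 0))"
      using P unfolding orthU_def by (simp add: sum_distrib_left[symmetric])
    also have "\<dots> = (\<Sum>l<n. Q l j * Q l k)"
      by (intro sum.cong refl) (simp add: sum_delta_r)
    also have "\<dots> = (if j = k then 1 else 0)" using Q j k unfolding orthU_def by simp
    finally show ?thesis .
  qed
  show ?thesis unfolding orthU_def using rows cols by simp
qed


lemma sum3_swap: "(\<Sum>p<(n::nat). \<Sum>q<n. \<Sum>j<n. F p q j) = (\<Sum>j<n. \<Sum>p<n. \<Sum>q<n. F p q j :: real)"
proof -
  have "(\<Sum>p<n. \<Sum>q<n. \<Sum>j<n. F p q j) = (\<Sum>p<n. \<Sum>j<n. \<Sum>q<n. F p q j)"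
    by (rule sum.cong[OF refl], rule sum.swap)
  also have "\<dots> = (\<Sum>j<n. \<Sum>p<n. \<Sum>q<n. F p q j)" by (rule sum.swap)
  finally show ?thesis .
qed

lemma sum4_swap: "(\<Sum>p<(n::nat). \<Sum>q<n. \<Sum>a<n. \<Sum>b<n. F p q a b) = (\<Sum>a<n. \<Sum>b<n. \<Sum>p<n. \<Sum>q<n. F p q a b :: real)"
proof -
  have "(\<Sum>p<n. \<Sum>q<n. \<Sum>a<n. \<Sum>b<n. F p q a b) = (\<Sum>p<n. \<Sum>a<n. \<Sum>q<n. \<Sum>b<n. F p q a b)"
    by (rule sum.cong[OF refl], rule sum.swap)
  also have "\<dots> = (\<Sum>p<n. \<Sum>a<n. \<Sum>b<n. \<Sum>q<n. F p q a b)"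
    by (rule sum.cong[OF refl], rule sum.cong[OF refl], rule sum.swap)
  also have "\<dots> = (\<Sum>a<n. \<Sum>p<n. \<Sum>b<n. \<Sum>q<n. F p q a b)" by (rule sum.swap)
  also have "\<dots> = (\<Sum>a<n. \<Sum>b<n. \<Sum>p<n. \<Sum>q<n. F p q a b)"
    by (rule sum.cong[OF refl], rule sum.swap)
  finally show ?thesis .
qed

lemma sum_delta_r2: "l < (n::nat) \<Longrightarrow> (\<Sum>r<n. f r * (if r = l then 1 else 0)) = (f l :: real)"
proof -
  assume "l < n"
  have "(\<Sum>r<n. f r * (if r = l then 1 else 0)) = (\<Sum>r<n. if r = l then f r else 0)"
    by (intro sum.cong) auto
  then show ?thesis using \<open>l < n\<close> by simp
qed

lemma delta2: "i < (n::nat) \<Longrightarrow> k < n \<Longrightarrow>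
  (\<Sum>a<n. \<Sum>b<n. A a b * (if i = a then 1 else 0) * (if b = k then 1 else 0)) = (A i k :: real)"
proof -
  assume i: "i < n" and k: "k < n"
  have "(\<Sum>a<n. \<Sum>b<n. A a b * (if i = a then 1 else 0) * (if b = k then 1 else 0))
      = (\<Sum>a<n. A a k * (if i = a then 1 else 0))"
    using sum_delta_r2[OF k, of "\<lambda>b. A _ b * (if i = _ then 1 else 0)"] by (intro sum.cong refl) simp
  also have "\<dots> = A i k" using sum_delta_r[OF i, of "\<lambda>a. A a k"] by simp
  finally show ?thesis .
qed

lemma prod3: "(c::real) * (\<Sum>p<n. x p) * (\<Sum>q<n. y q) = (\<Sum>p<n. \<Sum>q<n. c * x p * y q)"
  by (simp only: sum_distrib_left[of c] sum_product)

lemma prod3': "(\<Sum>p<n. x p) * (c::real) * (\<Sum>q<n. y q) = (\<Sum>p<n. \<Sum>q<n. x p * c * y q)"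
  by (simp only: sum_distrib_right[where r=c] sum_product)

lemma conj_diag:
  fixes P W B :: "nat \<Rightarrow> nat \<Rightarrow> real"
  assumes B: "\<forall>p<n. \<forall>q<n. B p q = (\<Sum>j<n. W p j * lam j * W q j)"
  shows "(\<Sum>p<n. \<Sum>q<n. P i p * B p q * P k q) =
         (\<Sum>j<n. (\<Sum>l<n. P i l * W l j) * lam j * (\<Sum>l<n. P k l * W l j))"
proof -
  have "(\<Sum>p<n. \<Sum>q<n. P i p * B p q * P k q) = (\<Sum>p<n. \<Sum>q<n. \<Sum>j<n. P i p * W p j * lam j * (P k q * W q j))"
  proof (intro sum.cong refl)
    fix p q assume "p \<in> {..<n}" "q \<in> {..<n}"
    then have Bpq: "B p q = (\<Sum>j<n. W p j * lam j * W q j)" using B by simp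
    show "P i p * B p q * P k q = (\<Sum>j<n. P i p * W p j * lam j * (P k q * W q j))"
      unfolding Bpq by (simp only: sum_distrib_left sum_distrib_right) (simp add: mult_ac)
  qed
  also have "\<dots> = (\<Sum>j<n. \<Sum>p<n. \<Sum>q<n. P i p * W p j * lam j * (P k q * W q j))"
    by (rule sum3_swap)
  also have "\<dots> = (\<Sum>j<n. (\<Sum>l<n. P i l * W l j) * lam j * (\<Sum>l<n. P k l * W l j))"
    by (simp only: prod3')
  finally show ?thesis .
qed

lemma conj_back:
  fixes A H :: "nat \<Rightarrow> nat \<Rightarrow> real"
  assumes H: "orthU n H" and Hs: "\<forall>i<n. \<forall>k<n. H i k = H k i" and i: "i < n" and k: "k < n"
  shows "(\<Sum>p<n. \<Sum>q<n. H i p * (\<Sum>a<n. \<Sum>b<n. H a p * A a b * H b q) * H k q) = A i k"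
proof -
  have "(\<Sum>p<n. \<Sum>q<n. H i p * (\<Sum>a<n. \<Sum>b<n. H a p * A a b * H b q) * H k q)
      = (\<Sum>p<n. \<Sum>q<n. \<Sum>a<n. \<Sum>b<n. A a b * (H i p * H a p) * (H b q * H k q))"
    by (simp add: sum_distrib_left sum_distrib_right mult_ac)
  also have "\<dots> = (\<Sum>a<n. \<Sum>b<n. \<Sum>p<n. \<Sum>q<n. A a b * (H i p * H a p) * (H b q * H k q))"
    by (rule sum4_swap)
  also have "\<dots> = (\<Sum>a<n. \<Sum>b<n. A a b * (\<Sum>p<n. H i p * H a p) * (\<Sum>q<n. H b q * H k q))"
    by (simp only: prod3)
  also have "\<dots> = (\<Sum>a<n. \<Sum>b<n. A a b * (if i = a then 1 else 0) * (if b = k then 1 else 0))"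
    using H i k unfolding orthU_def by (intro sum.cong refl) simp
  also have "\<dots> = A i k" using i k by (rule delta2)
  finally show ?thesis .
qed


lemma orthU_delta: "orthU N (\<lambda>i k. if i = k then 1 else 0)"
proof -
  have r: "(\<Sum>j<N. (if i = j then 1 else 0) * (if k = j then 1 else 0)) = (if i = k then 1 else (0::real))"
    if "i < N" for i k using sum_delta_l[OF that, of "\<lambda>j. if k = j then 1 else 0"] by auto
  have c: "(\<Sum>i<N. (if i = j then 1 else 0) * (if i = l then 1 else 0)) = (if j = l then 1 else (0::real))"
    if "l < N" for j l using sum_delta_r2[OF that, of "\<lambda>i. if i = j then 1 else 0"] by auto
  show ?thesis unfolding orthU_def using r c by simp
qed

lemma householder:
  fixes y :: "nat \<Rightarrow> real"
  assumes N: "0 < N" and y: "(\<Sum>i<N. (y i)\<^sup>2) = 1"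
  shows "\<exists>H. (\<forall>i<N. \<forall>k<N. H i k = H k i) \<and> orthU N H \<and> (\<forall>i<N. H i 0 = y i)"
proof -
  have split: "(\<Sum>i<N. f i) = f 0 + (\<Sum>i\<in>{..<N}-{0}. f i)" for f :: "nat \<Rightarrow> real"
    using N by (simp add: sum.remove)
  have y0le: "(y 0)\<^sup>2 \<le> 1"
  proof -
    have "0 \<le> (\<Sum>i\<in>{..<N}-{0}. (y i)\<^sup>2)" by (intro sum_nonneg) auto
    then show ?thesis using y split[of "\<lambda>i. (y i)\<^sup>2"] by linarith
  qed
  show ?thesis
  proof (cases "y 0 = 1")
    case True
    have "(\<Sum>i\<in>{..<N}-{0}. (y i)\<^sup>2) = 0" using y split[of "\<lambda>i. (y i)\<^sup>2"] True by simp
    then have yi: "\<forall>i\<in>{..<N}-{0}. (y i)\<^sup>2 = 0"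
      by (subst sum_nonneg_eq_0_iff[symmetric]) auto
    have "\<forall>i<N. (if i = 0 then 1 else 0) = y i"
      using yi True by auto
    then show ?thesis using orthU_delta[of N] by (intro exI[of _ "\<lambda>i k. if i = k then 1 else 0"]) auto
  next
    case False
    define x where "x i = (if i = 0 then 1 else 0) - y i" for i
    define c where "c = (\<Sum>i<N. (x i)\<^sup>2)"
    have c: "c = 2 - 2 * y 0"
    proof -
      have "(\<Sum>i<N. 2 * (if i = 0 then 1 else 0) * y i) = (\<Sum>i<N. if i = 0 then 2 * y i else 0)"
        by (intro sum.cong) auto
      then have two: "(\<Sum>i<N. 2 * (if i = 0 then 1 else 0) * y i) = 2 * y 0" using N by simp
      have "c = (\<Sum>i<N. (if i = 0 then 1 else 0) - 2 * (if i = 0 then 1 else 0) * y i + (y i)\<^sup>2)"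
        unfolding c_def x_def by (intro sum.cong refl) (simp add: power2_eq_square algebra_simps)
      also have "\<dots> = 1 - 2 * y 0 + 1"
        using N y two by (simp add: sum.distrib sum_subtractf sum_distrib_left[symmetric] sum_delta_l)
      finally show ?thesis by simp
    qed
    have "y 0 \<le> 1" using y0le by (metis abs_le_D1 abs_square_le_1)
    with False have cpos: "c > 0" using c by simp
    define \<kappa> where "\<kappa> = 2 / c"
    have kc: "\<kappa> * c = 2" using cpos by (simp add: \<kappa>_def)
    define d where "d i k = (if i = k then 1 else (0::real))" for i k :: nat
    define H where "H i k = d i k - \<kappa> * x i * x k" for i k
    have Hsym: "\<forall>i<N. \<forall>k<N. H i k = H k i" by (simp add: H_def d_def)
    have dx: "(\<Sum>j<N. d i j * x j) = x i" if "i < N" for i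
      using sum_delta_l[OF that, of x] by (simp add: d_def)
    have rows: "(\<Sum>j<N. H i j * H k j) = d i k" if i: "i < N" and k: "k < N" for i k
    proof -
      have "(\<Sum>j<N. H i j * H k j) = (\<Sum>j<N. d i j * d k j) - \<kappa> * x k * (\<Sum>j<N. d i j * x j)
          - \<kappa> * x i * (\<Sum>j<N. d k j * x j) + \<kappa>\<^sup>2 * x i * x k * c"
        unfolding H_def c_def
        by (simp add: algebra_simps sum.distrib sum_subtractf sum_distrib_left power2_eq_square)
      also have "\<dots> = d i k - \<kappa> * x k * x i - \<kappa> * x i * x k + \<kappa> * (\<kappa> * c) * x i * x k"
        using sum_delta_l[OF i, of "d k"] dx i k by (simp add: d_def power2_eq_square mult_ac)
      also have "\<dots> = d i k" using kc by (simp add: algebra_simps)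
      finally show ?thesis .
    qed
    have orth: "orthU N H"
      unfolding orthU_def using rows Hsym by (simp add: d_def)
    have "\<forall>i<N. H i 0 = y i"
    proof (intro allI impI)
      fix i assume "i < N"
      have "\<kappa> * x 0 = 1" using kc c cpos by (simp add: x_def \<kappa>_def field_simps)
      then have "H i 0 = d i 0 - x i" by (simp add: H_def mult_ac)
      then show "H i 0 = y i" by (simp add: d_def x_def)
    qed
    then show ?thesis using Hsym orth by blast
  qed
qed


lemma spectral:
  fixes A :: "nat \<Rightarrow> nat \<Rightarrow> real"
  assumes "\<forall>i<n. \<forall>k<n. A i k = A k i"
  shows "\<exists>U lam. orthU n U \<and> (\<forall>i<n. \<forall>k<n. A i k = (\<Sum>j<n. U i j * lam j * U k j))"
  using assms
proof (induction n arbitrary: A)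
  case 0
  show ?case by (simp add: orthU_def)
next
  case (Suc m)
  let ?N = "Suc m"
  obtain y \<mu> where y: "(\<Sum>i<?N. (y i)\<^sup>2) = 1" and ey: "\<forall>i<?N. (\<Sum>j<?N. A i j * y j) = \<mu> * y i"
    using real_eigvec[of ?N A] Suc.prems by auto
  obtain H where Hs: "\<forall>i<?N. \<forall>k<?N. H i k = H k i" and Ho: "orthU ?N H" and H0: "\<forall>i<?N. H i 0 = y i"
    using householder[of ?N y] y by auto
  define B where "B i k = (\<Sum>a<?N. \<Sum>b<?N. H a i * A a b * H b k)" for i k
  have Bsym: "\<forall>i<?N. \<forall>k<?N. B i k = B k i"
  proof (intro allI impI)
    fix i k assume "i < ?N" "k < ?N"
    have "B k i = (\<Sum>b<?N. \<Sum>a<?N. H a k * A a b * H b i)" unfolding B_def by (rule sum.swap)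
    also have "\<dots> = B i k" unfolding B_def using Suc.prems
      by (intro sum.cong refl) (simp add: mult_ac)
    finally show "B i k = B k i" by simp
  qed
  have B0: "\<forall>i<?N. B i 0 = (if i = 0 then \<mu> else 0)"
  proof (intro allI impI)
    fix i assume i: "i < ?N"
    have "B i 0 = (\<Sum>a<?N. H a i * (\<Sum>b<?N. A a b * H b 0))"
      unfolding B_def by (simp only: sum_distrib_left mult.assoc)
    also have "\<dots> = (\<Sum>a<?N. \<mu> * (H a i * H a 0))"
      using H0 ey by (intro sum.cong refl) simp
    also have "\<dots> = \<mu> * (if i = 0 then 1 else 0)"
      using Ho i unfolding orthU_def by (simp add: sum_distrib_left[symmetric])
    finally show "B i 0 = (if i = 0 then \<mu> else 0)" by simp
  qed
  define C where "C i k = B (Suc i) (Suc k)" for i k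
  have "\<forall>i<m. \<forall>k<m. C i k = C k i" using Bsym by (simp add: C_def)
  then obtain V \<nu> where Vo: "orthU m V" and CV: "\<forall>i<m. \<forall>k<m. C i k = (\<Sum>j<m. V i j * \<nu> j * V k j)"
    using Suc.IH by blast
  define W where "W i j = (if i = 0 then (if j = 0 then 1 else 0) else if j = 0 then 0 else V (i - 1) (j - 1))" for i j
  define lam where "lam j = (if j = 0 then \<mu> else \<nu> (j - 1))" for j
  have Wo: "orthU ?N W"
    unfolding orthU_def
  proof (intro conjI allI impI)
    fix i k assume i: "i < ?N" and k: "k < ?N"
    show "(\<Sum>j<?N. W i j * W k j) = (if i = k then 1 else 0)"
      using i k Vo unfolding orthU_def
      by (cases i; cases k) (simp_all add: sum.lessThan_Suc_shift W_def del: sum.lessThan_Suc)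
  next
    fix j l assume j: "j < ?N" and l: "l < ?N"
    show "(\<Sum>i<?N. W i j * W i l) = (if j = l then 1 else 0)"
      using j l Vo unfolding orthU_def
      by (cases j; cases l) (simp_all add: sum.lessThan_Suc_shift W_def del: sum.lessThan_Suc)
  qed
  have BW: "\<forall>p<?N. \<forall>q<?N. B p q = (\<Sum>j<?N. W p j * lam j * W q j)"
  proof (intro allI impI)
    fix p q assume p: "p < ?N" and q: "q < ?N"
    show "B p q = (\<Sum>j<?N. W p j * lam j * W q j)"
    proof (cases p)
      case 0
      have "B 0 q = B q 0" using Bsym q by simp
      then show ?thesis using B0 q 0 by (simp add: sum.lessThan_Suc_shift W_def lam_def del: sum.lessThan_Suc)
    next
      case (Suc p')
      show ?thesis
      proof (cases q)
        case 0
        then show ?thesis using B0 p \<open>p = Suc p'\<close> by (simp add: sum.lessThan_Suc_shift W_def lam_def del: sum.lessThan_Suc)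
      next
        case (Suc q')
        then show ?thesis using CV p q \<open>p = Suc p'\<close>
          by (simp add: sum.lessThan_Suc_shift W_def lam_def C_def del: sum.lessThan_Suc)
      qed
    qed
  qed
  define U where "U i j = (\<Sum>l<?N. H i l * W l j)" for i j
  have Uo: "orthU ?N U" using orth_mult[OF Ho Wo] unfolding U_def by simp
  have "\<forall>i<?N. \<forall>k<?N. A i k = (\<Sum>j<?N. U i j * lam j * U k j)"
  proof (intro allI impI)
    fix i k assume i: "i < ?N" and k: "k < ?N"
    have "A i k = (\<Sum>p<?N. \<Sum>q<?N. H i p * B p q * H k q)"
      using conj_back[OF Ho Hs i k, of A] unfolding B_def by simp
    also have "\<dots> = (\<Sum>j<?N. U i j * lam j * U k j)"
      unfolding U_def by (rule conj_diag[OF BW])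
    finally show "A i k = (\<Sum>j<?N. U i j * lam j * U k j)" .
  qed
  with Uo show ?case by blast
qed


lemma order_prod_linear:
  "Polynomial.order (a::real) (\<Prod>e\<leftarrow>es. [:- e, 1:]) = count (mset es) a"
proof (induction es)
  case Nil
  then show ?case by simp
next
  case (Cons e es)
  have nz1: "[:- e, 1:] \<noteq> (0::real poly)" by simp
  have "0 \<notin> set (map (\<lambda>e. [:- e, 1:]) es :: real poly list)" by auto
  then have nz2: "(\<Prod>e\<leftarrow>es. [:- e, 1:]) \<noteq> (0::real poly)"
    by (simp only: prod_list_zero_iff) simp
  have o1: "Polynomial.order a [:- e, 1:] = (if a = e then 1 else 0)"
  proof (cases "a = e")
    case True
    then show ?thesis using order_power_n_n[of a 1] by simp
  next
    case False
    then show ?thesis using order_eq_0_iff[OF nz1, of a] by simp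
  qed
  have "Polynomial.order a (\<Prod>e\<leftarrow>e # es. [:- e, 1:])
      = Polynomial.order a [:- e, 1:] + Polynomial.order a (\<Prod>e\<leftarrow>es. [:- e, 1:])"
  proof -
    have eq: "(\<Prod>e\<leftarrow>e # es. [:- e, 1:]) = [:- e, 1:] * (\<Prod>e\<leftarrow>es. [:- e, 1:] :: real poly)" by simp
    have "[:- e, 1:] * (\<Prod>e\<leftarrow>es. [:- e, 1:]) \<noteq> (0 :: real poly)" using nz1 nz2 by (metis mult_eq_0_iff)
    then show ?thesis unfolding eq by (rule order_mult)
  qed
  then show ?case using Cons o1 by simp
qed

lemma prod_linear_mset_eq:
  assumes "(\<Prod>e\<leftarrow>es. [:- e, 1:]) = (\<Prod>e\<leftarrow>ds. [:- e, 1:] :: real poly)"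
  shows "mset es = mset ds"
proof (rule multiset_eqI)
  fix a
  show "count (mset es) a = count (mset ds) a"
    using arg_cong[OF assms, of "Polynomial.order a"] by (simp add: order_prod_linear)
qed

lemma sorted_eigs_sum:
  fixes A U :: "nat \<Rightarrow> nat \<Rightarrow> real" and lam :: "nat \<Rightarrow> real"
  assumes U: "orthU n U" and AU: "\<forall>i<n. \<forall>k<n. A i k = (\<Sum>j<n. U i j * lam j * U k j)"
  shows "(\<Sum>j<n. f (sorted_eigs (Matrix.mat n n (\<lambda>(i,k). A i k)) ! j)) = (\<Sum>j<n. f (lam j))"
proof -
  define M where "M = Matrix.mat n n (\<lambda>(i,k). A i k)"
  define Q where "Q = Matrix.mat n n (\<lambda>(i,j). U i j)"
  define D where "D = Matrix.mat n n (\<lambda>(i,j). if i = j then lam i else 0)"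
  define Qt where "Qt = transpose_mat Q"
  have QQt: "Q * Qt = 1\<^sub>m n"
    using U unfolding orthU_def
    by (intro eq_matI) (auto simp: Q_def Qt_def scalar_prod_def atLeast0LessThan)
  have QtQ: "Qt * Q = 1\<^sub>m n"
    using U unfolding orthU_def
    by (intro eq_matI) (auto simp: Q_def Qt_def scalar_prod_def atLeast0LessThan)
  have QD: "(Q * D) $$ (i, j) = U i j * lam j" if "i < n" "j < n" for i j
  proof -
    have "(Q * D) $$ (i, j) = (\<Sum>l<n. U i l * (if l = j then lam l else 0))"
      using that by (simp add: Q_def D_def scalar_prod_def atLeast0LessThan)
    also have "\<dots> = (\<Sum>l<n. (U i l * lam l) * (if l = j then 1 else 0))"
      by (intro sum.cong refl) auto
    also have "\<dots> = U i j * lam j" using sum_delta_r2[OF that(2)] by simp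
    finally show ?thesis .
  qed
  have MQ: "M = Q * D * Qt"
  proof (rule eq_matI)
    fix i k assume i: "i < dim_row (Q * D * Qt)" and k: "k < dim_col (Q * D * Qt)"
    then have i': "i < n" and k': "k < n" by (auto simp: Q_def Qt_def)
    have "(Q * D * Qt) $$ (i, k) = (\<Sum>j<n. (Q * D) $$ (i, j) * U k j)"
      using i' k' by (simp add: Q_def D_def Qt_def scalar_prod_def atLeast0LessThan)
    also have "\<dots> = (\<Sum>j<n. U i j * lam j * U k j)"
      using QD i' by (intro sum.cong refl) auto
    also have "\<dots> = M $$ (i, k)" using AU i' k' by (simp add: M_def)
    finally show "M $$ (i, k) = (Q * D * Qt) $$ (i, k)" by simp
  qed (auto simp: M_def Q_def Qt_def)
  have sim: "similar_mat M D"
    unfolding similar_mat_def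
    by (rule exI[of _ Q], rule exI[of _ Qt], rule similar_mat_witI[OF QQt QtQ MQ])
       (auto simp: M_def D_def Q_def Qt_def)
  have Dc: "D \<in> carrier_mat n n" by (simp add: D_def)
  have ut: "upper_triangular D" by (simp add: D_def upper_triangular_def)
  have diag: "diag_mat D = map lam [0..<n]"
    by (simp add: diag_mat_def D_def list_eq_iff_nth_eq)
  define ds where "ds = map lam [0..<n]"
  have cp: "char_poly M = (\<Prod>e\<leftarrow>ds. [:- e, 1:])"
    using char_poly_similar[OF sim] char_poly_upper_triangular[OF Dc ut] diag ds_def by simp
  have ex: "\<exists>es. sorted_wrt (\<ge>) es \<and> char_poly M = (\<Prod>e\<leftarrow>es. [:- e, 1:])"
  proof (intro exI conjI)
    show "sorted_wrt (\<ge>) (rev (sort ds))" by (simp add: sorted_wrt_rev)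
    have "(\<Prod>e\<leftarrow>rev (sort ds). [:- e, 1:]) = (\<Prod>e\<leftarrow>ds. [:- e, 1:] :: real poly)"
      by (simp add: prod_mset_prod_list[symmetric])
    then show "char_poly M = (\<Prod>e\<leftarrow>rev (sort ds). [:- e, 1:])" using cp by simp
  qed
  define es where "es = sorted_eigs M"
  have "sorted_wrt (\<ge>) es \<and> char_poly M = (\<Prod>e\<leftarrow>es. [:- e, 1:])"
    unfolding es_def sorted_eigs_def by (rule someI_ex[OF ex])
  then have "mset es = mset ds" using cp prod_linear_mset_eq by metis
  then have len: "length es = n" and sl: "sum_list (map f es) = sum_list (map f ds)"
    using mset_eq_length[of es ds] ds_def apply simp
    using \<open>mset es = mset ds\<close> by (metis mset_map sum_mset_sum_list)
  have "(\<Sum>j<n. f (es ! j)) = sum_list (map f es)"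
    using len by (simp add: sum_list_sum_nth atLeast0LessThan)
  also have "\<dots> = (\<Sum>j<n. f (lam j))" using sl by (simp add: ds_def sum_list_sum_nth atLeast0LessThan)
  finally show ?thesis unfolding es_def M_def .
qed


lemma orth_inner:
  fixes U :: "nat \<Rightarrow> nat \<Rightarrow> real"
  assumes U: "orthU n U"
  shows "(\<Sum>i<n. (\<Sum>p<n. U i p * x p) * (\<Sum>q<n. U i q * y q)) = (\<Sum>p<n. x p * y p)"
proof -
  have "(\<Sum>i<n. (\<Sum>p<n. U i p * x p) * (\<Sum>q<n. U i q * y q)) = (\<Sum>i<n. \<Sum>p<n. \<Sum>q<n. x p * y q * (U i p * U i q))"
    by (simp add: sum_product mult_ac)
  also have "\<dots> = (\<Sum>p<n. \<Sum>q<n. \<Sum>i<n. x p * y q * (U i p * U i q))"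
    by (subst sum.swap, rule sum.cong[OF refl], rule sum.swap)
  also have "\<dots> = (\<Sum>p<n. \<Sum>q<n. x p * y q * (if p = q then 1 else 0))"
    using U unfolding orthU_def by (simp add: sum_distrib_left[symmetric])
  also have "\<dots> = (\<Sum>p<n. x p * y p)"
    by (intro sum.cong refl) (simp add: sum_delta_r)
  finally show ?thesis .
qed

lemma orth_coef:
  fixes U :: "nat \<Rightarrow> nat \<Rightarrow> real"
  assumes U: "orthU n U" and j: "j < n"
  shows "(\<Sum>i<n. U i j * (\<Sum>p<n. U i p * x p)) = x j"
proof -
  have "(\<Sum>i<n. U i j * (\<Sum>p<n. U i p * x p)) = (\<Sum>i<n. \<Sum>p<n. x p * (U i j * U i p))"
    by (simp add: sum_distrib_left mult_ac)
  also have "\<dots> = (\<Sum>p<n. \<Sum>i<n. x p * (U i j * U i p))" by (rule sum.swap)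
  also have "\<dots> = (\<Sum>p<n. x p * (if j = p then 1 else 0))"
    using U j unfolding orthU_def by (simp add: sum_distrib_left[symmetric])
  also have "\<dots> = x j" using sum_delta_r[OF j] by simp
  finally show ?thesis .
qed

lemma orth_recon:
  fixes U :: "nat \<Rightarrow> nat \<Rightarrow> real"
  assumes U: "orthU n U" and i: "i < n"
  shows "(\<Sum>j<n. U i j * (\<Sum>k<n. U k j * x k)) = x i"
proof -
  have "(\<Sum>j<n. U i j * (\<Sum>k<n. U k j * x k)) = (\<Sum>j<n. \<Sum>k<n. x k * (U i j * U k j))"
    by (simp add: sum_distrib_left mult_ac)
  also have "\<dots> = (\<Sum>k<n. \<Sum>j<n. x k * (U i j * U k j))" by (rule sum.swap)
  also have "\<dots> = (\<Sum>k<n. x k * (if i = k then 1 else 0))"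
    using U i unfolding orthU_def by (simp add: sum_distrib_left[symmetric])
  also have "\<dots> = x i" using sum_delta_r[OF i] by simp
  finally show ?thesis .
qed

lemma prod2: "(c::real) * ((\<Sum>i<n. x i) * (\<Sum>k<n. y k)) = (\<Sum>i<n. \<Sum>k<n. c * (x i * y k))"
  by (simp only: sum_product sum_distrib_left[of c])

lemma quad_form:
  fixes U G :: "nat \<Rightarrow> nat \<Rightarrow> real"
  assumes U: "orthU n U" and G: "\<forall>i<n. \<forall>k<n. G i k = (\<Sum>j<n. U i j * lam j * U k j)"
  shows "(\<Sum>i<n. \<Sum>k<n. (\<Sum>p<n. U i p * x p) * (\<Sum>q<n. U k q * x q) * G i k) = (\<Sum>j<n. lam j * (x j)\<^sup>2)"
proof -
  define a where "a i = (\<Sum>p<n. U i p * x p)" for i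
  have "(\<Sum>i<n. \<Sum>k<n. a i * a k * G i k) = (\<Sum>i<n. \<Sum>k<n. \<Sum>j<n. lam j * ((U i j * a i) * (U k j * a k)))"
    using G by (intro sum.cong refl) (simp add: sum_distrib_left mult_ac)
  also have "\<dots> = (\<Sum>j<n. \<Sum>i<n. \<Sum>k<n. lam j * ((U i j * a i) * (U k j * a k)))"
    by (rule sum3_swap)
  also have "\<dots> = (\<Sum>j<n. lam j * ((\<Sum>i<n. U i j * a i) * (\<Sum>k<n. U k j * a k)))"
    by (simp only: prod2)
  also have "\<dots> = (\<Sum>j<n. lam j * (x j)\<^sup>2)"
    using orth_coef[OF U] unfolding a_def by (intro sum.cong refl) (simp add: power2_eq_square)
  finally show ?thesis unfolding a_def .
qed


lemma key_ineq:
  fixes U G :: "nat \<Rightarrow> nat \<Rightarrow> real" and lam v \<epsilon> :: "nat \<Rightarrow> real"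
  assumes U: "orthU n U" and G: "\<forall>i<n. \<forall>k<n. G i k = (\<Sum>j<n. U i j * lam j * U k j)"
    and lam0: "\<forall>j<n. 0 \<le> lam j" and P: "0 < P" and Qc: "0 < Qc"
    and hyp: "\<forall>a. 2 * (\<Sum>i<n. a i * v i) - (\<Sum>i<n. \<Sum>k<n. a i * a k * G i k) \<le> Nh"
    and tot: "P * (\<Sum>i<n. (v i)\<^sup>2) + Qc * Nh \<le> 1"
  shows "2 * s * (\<Sum>i<n. \<epsilon> i * v i) - s\<^sup>2 * (\<Sum>j<n. (\<Sum>i<n. U i j * \<epsilon> i)\<^sup>2 * (lam j / (P * lam j + Qc))) \<le> 1"
proof -
  define e where "e j = (\<Sum>i<n. U i j * \<epsilon> i)" for j
  define dn where "dn j = P * lam j + Qc" for j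
  have dn: "dn j > 0" if "j < n" for j
    using lam0 that P Qc unfolding dn_def by (simp add: add_nonneg_pos)
  define \<alpha> where "\<alpha> j = s * e j / dn j" for j
  define \<beta> where "\<beta> j = lam j * \<alpha> j" for j
  define a where "a i = (\<Sum>p<n. U i p * \<alpha> p)" for i
  define b where "b i = (\<Sum>p<n. U i p * \<beta> p)" for i
  have h1: "2 * (\<Sum>i<n. a i * v i) - (\<Sum>j<n. lam j * (\<alpha> j)\<^sup>2) \<le> Nh"
    using hyp[rule_format, of a] quad_form[OF U G, of \<alpha>] unfolding a_def by simp
  have bb: "(\<Sum>i<n. (b i)\<^sup>2) = (\<Sum>j<n. (\<beta> j)\<^sup>2)"
    using orth_inner[OF U, of \<beta> \<beta>] unfolding b_def by (simp add: power2_eq_square)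
  have "0 \<le> (\<Sum>i<n. (v i - b i)\<^sup>2)" by (intro sum_nonneg) auto
  also have "\<dots> = (\<Sum>i<n. (v i)\<^sup>2) - 2 * (\<Sum>i<n. b i * v i) + (\<Sum>i<n. (b i)\<^sup>2)"
    by (simp add: power2_diff sum.distrib sum_subtractf sum_distrib_left mult_ac)
  finally have h2: "2 * (\<Sum>i<n. b i * v i) - (\<Sum>j<n. (\<beta> j)\<^sup>2) \<le> (\<Sum>i<n. (v i)\<^sup>2)"
    using bb by simp
  have h3: "P * b i + Qc * a i = s * \<epsilon> i" if i: "i < n" for i
  proof -
    have "P * b i + Qc * a i = (\<Sum>p<n. U i p * (P * \<beta> p + Qc * \<alpha> p))"
      unfolding a_def b_def by (simp add: sum_distrib_left sum.distrib algebra_simps)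
    also have "\<dots> = (\<Sum>p<n. U i p * (s * e p))"
    proof (intro sum.cong refl)
      fix p assume "p \<in> {..<n}"
      then have "dn p > 0" using dn by simp
      have "P * \<beta> p + Qc * \<alpha> p = \<alpha> p * dn p" by (simp add: \<beta>_def dn_def algebra_simps)
      also have "\<dots> = s * e p" using \<open>dn p > 0\<close> by (simp add: \<alpha>_def)
      finally have "P * \<beta> p + Qc * \<alpha> p = s * e p" .
      then show "U i p * (P * \<beta> p + Qc * \<alpha> p) = U i p * (s * e p)" by simp
    qed
    also have "\<dots> = s * (\<Sum>p<n. U i p * e p)" by (simp add: sum_distrib_left mult_ac)
    also have "\<dots> = s * \<epsilon> i" using orth_recon[OF U i, of \<epsilon>] unfolding e_def by simp
    finally show ?thesis .
  qed
  have h4: "P * (\<beta> j)\<^sup>2 + Qc * (lam j * (\<alpha> j)\<^sup>2) = s\<^sup>2 * ((e j)\<^sup>2 * (lam j / dn j))" if j: "j < n" for j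
  proof -
    have d: "dn j > 0" using dn j by simp
    have "P * (\<beta> j)\<^sup>2 + Qc * (lam j * (\<alpha> j)\<^sup>2) = lam j * (\<alpha> j)\<^sup>2 * dn j"
      by (simp add: \<beta>_def dn_def power2_eq_square algebra_simps)
    also have "\<dots> = lam j * (s * e j) * (s * e j) / dn j"
      using d by (simp add: \<alpha>_def power2_eq_square field_simps)
    also have "\<dots> = s\<^sup>2 * ((e j)\<^sup>2 * (lam j / dn j))"
      by (simp add: power2_eq_square field_simps)
    finally show ?thesis .
  qed
  have "2 * (\<Sum>i<n. (P * b i + Qc * a i) * v i) - (\<Sum>j<n. P * (\<beta> j)\<^sup>2 + Qc * (lam j * (\<alpha> j)\<^sup>2))
      = P * (2 * (\<Sum>i<n. b i * v i) - (\<Sum>j<n. (\<beta> j)\<^sup>2)) + Qc * (2 * (\<Sum>i<n. a i * v i) - (\<Sum>j<n. lam j * (\<alpha> j)\<^sup>2))"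
    by (simp add: sum.distrib sum_distrib_left algebra_simps)
  also have "\<dots> \<le> P * (\<Sum>i<n. (v i)\<^sup>2) + Qc * Nh"
    using h1 h2 P Qc by (intro add_mono mult_left_mono) auto
  also have "\<dots> \<le> 1" by (rule tot)
  finally have fin: "2 * (\<Sum>i<n. (P * b i + Qc * a i) * v i) - (\<Sum>j<n. P * (\<beta> j)\<^sup>2 + Qc * (lam j * (\<alpha> j)\<^sup>2)) \<le> 1" .
  have "(\<Sum>i<n. (P * b i + Qc * a i) * v i) = s * (\<Sum>i<n. \<epsilon> i * v i)"
    using h3 by (simp add: sum_distrib_left mult_ac)
  moreover have "(\<Sum>j<n. P * (\<beta> j)\<^sup>2 + Qc * (lam j * (\<alpha> j)\<^sup>2)) = s\<^sup>2 * (\<Sum>j<n. (e j)\<^sup>2 * (lam j / dn j))"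
    using h4 by (simp add: sum_distrib_left)
  ultimately show ?thesis using fin unfolding e_def dn_def by (simp add: mult_ac)
qed


abbreviation "Rad n \<equiv> PiE {..<n} (\<lambda>_. {-1, 1::real})"

lemma card_Rad: "card (Rad n) = 2 ^ n"
  by (simp add: card_PiE numeral_2_eq_2)

lemma rad_cross:
  assumes i: "i < n" and k: "k < n"
  shows "(\<Sum>\<epsilon>\<in>Rad n. \<epsilon> i * \<epsilon> k) = (if i = k then 2 ^ n else 0)"
proof (cases "i = k")
  case True
  have "(\<Sum>\<epsilon>\<in>Rad n. \<epsilon> i * \<epsilon> k) = (\<Sum>\<epsilon>\<in>Rad n. 1)"
  proof (intro sum.cong refl)
    fix \<epsilon> assume "\<epsilon> \<in> Rad n"
    then have "\<epsilon> i \<in> {-1, 1}" using i by (auto simp: PiE_def Pi_def)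
    then show "\<epsilon> i * \<epsilon> k = 1" using True by auto
  qed
  then show ?thesis using True card_Rad[of n] by simp
next
  case False
  define \<sigma> where "\<sigma> \<epsilon> = \<epsilon>(i := - \<epsilon> i)" for \<epsilon> :: "nat \<Rightarrow> real"
  have mem: "\<sigma> \<epsilon> \<in> Rad n" if "\<epsilon> \<in> Rad n" for \<epsilon>
    using that i unfolding \<sigma>_def by (auto simp: PiE_def Pi_def extensional_def)
  have inv: "\<sigma> (\<sigma> \<epsilon>) = \<epsilon>" for \<epsilon> unfolding \<sigma>_def by auto
  have bij: "bij_betw \<sigma> (Rad n) (Rad n)"
    by (rule bij_betw_byWitness[of _ \<sigma>]) (use mem inv in auto)
  have "(\<Sum>\<epsilon>\<in>Rad n. \<epsilon> i * \<epsilon> k) = (\<Sum>\<epsilon>\<in>Rad n. \<sigma> \<epsilon> i * \<sigma> \<epsilon> k)"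
    using sum.reindex_bij_betw[OF bij, of "\<lambda>\<epsilon>. \<epsilon> i * \<epsilon> k"] by simp
  also have "\<dots> = - (\<Sum>\<epsilon>\<in>Rad n. \<epsilon> i * \<epsilon> k)"
    using False by (simp add: \<sigma>_def sum_negf)
  finally show ?thesis using False by simp
qed

lemma rad_quad:
  fixes U :: "nat \<Rightarrow> nat \<Rightarrow> real"
  assumes U: "orthU n U"
  shows "rademacher_exp n (\<lambda>\<epsilon>. \<Sum>j<n. (\<Sum>i<n. U i j * \<epsilon> i)\<^sup>2 * c j) = (\<Sum>j<n. c j)"
proof -
  have "(\<Sum>\<epsilon>\<in>Rad n. \<Sum>j<n. (\<Sum>i<n. U i j * \<epsilon> i)\<^sup>2 * c j)
      = (\<Sum>\<epsilon>\<in>Rad n. \<Sum>j<n. \<Sum>i<n. \<Sum>k<n. c j * (U i j * U k j) * (\<epsilon> i * \<epsilon> k))"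
    by (intro sum.cong refl) (simp add: power2_eq_square sum_product sum_distrib_left sum_distrib_right mult_ac)
  also have "\<dots> = (\<Sum>j<n. \<Sum>i<n. \<Sum>k<n. c j * (U i j * U k j) * (\<Sum>\<epsilon>\<in>Rad n. \<epsilon> i * \<epsilon> k))"
    by (simp add: sum_distrib_left sum.swap[of _ "Rad n"])
  also have "\<dots> = (\<Sum>j<n. \<Sum>i<n. c j * (U i j * U i j) * 2 ^ n)"
  proof (intro sum.cong refl)
    fix j i assume "i \<in> {..<n}"
    then have "(\<Sum>k<n. c j * (U i j * U k j) * (\<Sum>\<epsilon>\<in>Rad n. \<epsilon> i * \<epsilon> k))
        = (\<Sum>k<n. (c j * (U i j * U k j) * 2 ^ n) * (if k = i then 1 else 0))"
      by (intro sum.cong refl) (auto simp: rad_cross)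
    also have "\<dots> = c j * (U i j * U i j) * 2 ^ n" using \<open>i \<in> {..<n}\<close> sum_delta_r2 by simp
    finally show "(\<Sum>k<n. c j * (U i j * U k j) * (\<Sum>\<epsilon>\<in>Rad n. \<epsilon> i * \<epsilon> k)) = c j * (U i j * U i j) * 2 ^ n" .
  qed
  also have "\<dots> = (\<Sum>j<n. c j * 2 ^ n)"
  proof (intro sum.cong refl)
    fix j assume "j \<in> {..<n}"
    then have "(\<Sum>i<n. U i j * U i j) = 1" using U unfolding orthU_def by simp
    moreover have "(\<Sum>i<n. c j * (U i j * U i j) * 2 ^ n) = c j * (\<Sum>i<n. U i j * U i j) * 2 ^ n"
      by (simp only: sum_distrib_left sum_distrib_right)
    ultimately show "(\<Sum>i<n. c j * (U i j * U i j) * 2 ^ n) = c j * 2 ^ n" by simp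
  qed
  finally show ?thesis unfolding rademacher_exp_def by (simp add: sum_distrib_right[symmetric])
qed


context
  fixes Zs :: "'z set" and K :: "'z \<Rightarrow> 'z \<Rightarrow> real" and H :: "('z \<Rightarrow> real) set"
    and ip :: "('z \<Rightarrow> real) \<Rightarrow> ('z \<Rightarrow> real) \<Rightarrow> real"
  assumes R: "rkhs Zs K H ip"
begin

lemma rk_add: "f \<in> H \<Longrightarrow> g \<in> H \<Longrightarrow> (\<lambda>z. f z + g z) \<in> H"
  using R unfolding rkhs_def by blast
lemma rk_smult: "f \<in> H \<Longrightarrow> (\<lambda>z. a * f z) \<in> H"
  using R unfolding rkhs_def by blast
lemma rk_zero: "(\<lambda>z. 0) \<in> H"
  using R unfolding rkhs_def by blast
lemma rk_sym: "f \<in> H \<Longrightarrow> g \<in> H \<Longrightarrow> ip f g = ip g f"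
  using R unfolding rkhs_def by blast
lemma rk_ip_add: "f \<in> H \<Longrightarrow> g \<in> H \<Longrightarrow> h \<in> H \<Longrightarrow> ip (\<lambda>z. f z + g z) h = ip f h + ip g h"
  using R unfolding rkhs_def by blast
lemma rk_ip_smult: "f \<in> H \<Longrightarrow> g \<in> H \<Longrightarrow> ip (\<lambda>z. a * f z) g = a * ip f g"
  using R unfolding rkhs_def by blast
lemma rk_pos: "f \<in> H \<Longrightarrow> 0 \<le> ip f f"
  using R unfolding rkhs_def by blast
lemma rk_ksec: "z \<in> Zs \<Longrightarrow> ksec Zs K z \<in> H"
  using R unfolding rkhs_def by blast
lemma rk_repr: "f \<in> H \<Longrightarrow> z \<in> Zs \<Longrightarrow> ip f (ksec Zs K z) = f z"
  using R unfolding rkhs_def by blast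

lemma rk_diff: "f \<in> H \<Longrightarrow> g \<in> H \<Longrightarrow> (\<lambda>z. f z - g z) \<in> H"
proof -
  assume f: "f \<in> H" and g: "g \<in> H"
  have "(\<lambda>z. f z + (\<lambda>z. (-1) * g z) z) \<in> H" by (intro rk_add f rk_smult g)
  then show ?thesis by simp
qed

lemma rk_ip_diff: "f \<in> H \<Longrightarrow> g \<in> H \<Longrightarrow> h \<in> H \<Longrightarrow> ip (\<lambda>z. f z - g z) h = ip f h - ip g h"
proof -
  assume f: "f \<in> H" and g: "g \<in> H" and h: "h \<in> H"
  have mg: "(\<lambda>z. (-1) * g z) \<in> H" by (rule rk_smult[OF g])
  have "ip (\<lambda>z. f z + (\<lambda>z. (-1) * g z) z) h = ip f h + ip (\<lambda>z. (-1) * g z) h"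
    by (rule rk_ip_add[OF f mg h])
  also have "\<dots> = ip f h - ip g h" using rk_ip_smult[OF g h, of "-1"] by simp
  finally show ?thesis by simp
qed

lemma rk_ip_zero: "h \<in> H \<Longrightarrow> ip (\<lambda>z. 0) h = 0"
  using rk_ip_smult[of h h 0] by simp

lemma rk_span:
  fixes m :: nat and z :: "nat \<Rightarrow> 'z"
  assumes z: "\<forall>i<m. z i \<in> Zs" and h: "h \<in> H"
  shows "(\<lambda>w. \<Sum>i<m. a i * ksec Zs K (z i) w) \<in> H \<and>
         ip (\<lambda>w. \<Sum>i<m. a i * ksec Zs K (z i) w) h = (\<Sum>i<m. a i * h (z i))"
  using z
proof (induction m)
  case 0
  then show ?case using rk_zero rk_ip_zero[OF h] by simp
next
  case (Suc m)
  let ?F = "\<lambda>w. \<Sum>i<m. a i * ksec Zs K (z i) w"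
  let ?k = "\<lambda>w. a m * ksec Zs K (z m) w"
  from Suc have F: "?F \<in> H" and Fh: "ip ?F h = (\<Sum>i<m. a i * h (z i))" by auto
  have zm: "z m \<in> Zs" using Suc.prems by simp
  have k: "?k \<in> H" by (rule rk_smult[OF rk_ksec[OF zm]])
  have eq: "(\<lambda>w. \<Sum>i<Suc m. a i * ksec Zs K (z i) w) = (\<lambda>w. ?F w + ?k w)" by simp
  have "ip (\<lambda>w. ?F w + ?k w) h = ip ?F h + ip ?k h" by (rule rk_ip_add[OF F k h])
  also have "ip ?k h = a m * ip (ksec Zs K (z m)) h" by (rule rk_ip_smult[OF rk_ksec[OF zm] h])
  also have "ip (ksec Zs K (z m)) h = h (z m)"
    using rk_sym[OF rk_ksec[OF zm] h] rk_repr[OF h zm] by simp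
  finally show ?case unfolding eq using F k Fh by (simp add: rk_add)
qed

lemma rk_key:
  fixes m :: nat and z :: "nat \<Rightarrow> 'z"
  assumes z: "\<forall>i<m. z i \<in> Zs" and h: "h \<in> H"
  shows "2 * (\<Sum>i<m. a i * h (z i)) - (\<Sum>i<m. \<Sum>k<m. a i * a k * K (z k) (z i)) \<le> ip h h"
proof -
  define F where "F = (\<lambda>w. \<Sum>i<m. a i * ksec Zs K (z i) w)"
  have F: "F \<in> H" using rk_span[OF z h] unfolding F_def by simp
  have Fh: "ip F h = (\<Sum>i<m. a i * h (z i))" using rk_span[OF z h] unfolding F_def by simp
  have FF: "ip F F = (\<Sum>i<m. a i * F (z i))" using rk_span[OF z F] unfolding F_def by simp
  also have "\<dots> = (\<Sum>i<m. \<Sum>k<m. a i * a k * K (z k) (z i))"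
    unfolding F_def using z by (simp add: ksec_def sum_distrib_left mult_ac)
  finally have FF: "ip F F = (\<Sum>i<m. \<Sum>k<m. a i * a k * K (z k) (z i))" .
  have d: "(\<lambda>w. h w - F w) \<in> H" by (rule rk_diff[OF h F])
  have "0 \<le> ip (\<lambda>w. h w - F w) (\<lambda>w. h w - F w)" by (rule rk_pos[OF d])
  also have "\<dots> = ip h (\<lambda>w. h w - F w) - ip F (\<lambda>w. h w - F w)" by (rule rk_ip_diff[OF h F d])
  also have "ip h (\<lambda>w. h w - F w) = ip h h - ip F h"
    using rk_sym[OF h d] rk_ip_diff[OF h F h] by simp
  also have "ip F (\<lambda>w. h w - F w) = ip h F - ip F F"
    using rk_sym[OF F d] rk_ip_diff[OF h F F] by simp
  also have "ip h F = ip F h" by (rule rk_sym[OF h F])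
  finally show ?thesis using Fh FF by simp
qed

end


lemma opt_s:
  fixes L T c :: real
  assumes hs: "\<forall>s>0. L \<le> (1 + s\<^sup>2 * T) / (2 * s * c)" and T: "T \<ge> 0" and c: "c > 0"
  shows "L \<le> sqrt T / c"
proof (cases "T > 0")
  case True
  define s where "s = 1 / sqrt T"
  have sp: "s > 0" using True by (simp add: s_def)
  have "s\<^sup>2 * T = 1" using True by (simp add: s_def power_divide)
  then have "(1 + s\<^sup>2 * T) / (2 * s * c) = sqrt T / c"
    using True c by (simp add: s_def field_simps)
  then show ?thesis using hs sp by metis
next
  case False
  then have T0: "T = 0" using T by simp
  show ?thesis
  proof (rule ccontr)
    assume "\<not> L \<le> sqrt T / c"
    then have L: "L > 0" using T0 by simp
    define s where "s = 1 / (L * c)"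
    have sp: "s > 0" using L c by (simp add: s_def)
    have "(1 + s\<^sup>2 * T) / (2 * s * c) = L / 2" using L c T0 by (simp add: s_def field_simps)
    moreover have "L \<le> (1 + s\<^sup>2 * T) / (2 * s * c)" using hs sp by blast
    ultimately show False using L by linarith
  qed
qed

lemma rad_mono: "(\<forall>\<epsilon>\<in>Rad n. S \<epsilon> \<le> T \<epsilon>) \<Longrightarrow> rademacher_exp n S \<le> rademacher_exp n T"
  unfolding rademacher_exp_def by (intro divide_right_mono sum_mono) auto

lemma rad_affine: "rademacher_exp n (\<lambda>\<epsilon>. a + b * F \<epsilon>) = a + b * rademacher_exp n F"
  unfolding rademacher_exp_def
  by (simp add: sum.distrib sum_distrib_left[symmetric] card_Rad add_divide_distrib)

lemma gamma_bound:
  fixes lam nn \<delta> M :: real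
  assumes lam: "lam \<ge> 0" and nn: "nn > 0" and \<delta>: "\<delta> > 0" and M: "M \<ge> 1"
  shows "(nn * lam) / ((1 / (10 * nn * \<delta>)) * (nn * lam) + 1 / (10 * M\<^sup>2)) \<le> 10 * nn * M\<^sup>2 * min \<delta> lam"
proof -
  define P where "P = 1 / (10 * nn * \<delta>)"
  define Q where "Q = 1 / (10 * M\<^sup>2)"
  have P: "P > 0" using nn \<delta> by (simp add: P_def)
  have Q: "Q > 0" using M by (simp add: Q_def)
  define L where "L = nn * lam"
  have L: "L \<ge> 0" using nn lam by (simp add: L_def)
  define \<gamma> where "\<gamma> = L / (P * L + Q)"
  have dpos: "P * L + Q > 0" using P Q L by (simp add: add_nonneg_pos)
  have g0: "\<gamma> \<ge> 0" using L dpos by (simp add: \<gamma>_def)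
  have "\<gamma> * (P * L + Q) = L" unfolding \<gamma>_def using dpos by simp
  then have geq: "\<gamma> * (P * L) + \<gamma> * Q = L" by (simp add: distrib_left)
  have b1: "\<gamma> \<le> 10 * nn * M\<^sup>2 * \<delta>"
  proof (cases "L = 0")
    case True
    then show ?thesis using g0 nn \<delta> by (simp add: \<gamma>_def)
  next
    case False
    then have Lp: "L > 0" using L by simp
    have "\<gamma> * Q \<ge> 0" using g0 Q by simp
    then have "\<gamma> * P * L \<le> L" using geq by (simp add: mult.assoc)
    then have "\<gamma> * P \<le> 1" using Lp by (simp add: mult_le_cancel_right1 mult.commute)
    then have "\<gamma> \<le> 1 / P" using P by (simp add: field_simps)
    also have "1 / P = 10 * nn * \<delta>" by (simp add: P_def)
    also have "\<dots> \<le> 10 * nn * M\<^sup>2 * \<delta>"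
    proof -
      have "1 \<le> M\<^sup>2" using M by (simp add: one_le_power)
      then show ?thesis using nn \<delta> by (simp add: mult_le_cancel_left1 mult.commute mult.left_commute)
    qed
    finally show ?thesis .
  qed
  have b2: "\<gamma> \<le> 10 * nn * M\<^sup>2 * lam"
  proof -
    have "\<gamma> * (P * L) \<ge> 0" using g0 P L by simp
    then have "\<gamma> * Q \<le> L" using geq by linarith
    then have "\<gamma> \<le> L / Q" using Q by (simp add: field_simps)
    also have "L / Q = 10 * nn * M\<^sup>2 * lam" by (simp add: Q_def L_def)
    finally show ?thesis .
  qed
  have "\<gamma> \<le> 10 * nn * M\<^sup>2 * min \<delta> lam"
    using b1 b2 by (simp add: min_def)
  then show ?thesis unfolding \<gamma>_def L_def P_def Q_def .
qed

theorem lemma10: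
  fixes \<rho> :: "(real ^ 'r) measure" and Zs :: "(real ^ 'r) set" and Xs :: "(real ^ 'p) set"
    and K :: "real ^ 'r \<Rightarrow> real ^ 'r \<Rightarrow> real"
    and H :: "(real ^ 'r \<Rightarrow> real) set"
    and ip :: "(real ^ 'r \<Rightarrow> real) \<Rightarrow> (real ^ 'r \<Rightarrow> real) \<Rightarrow> real"
    and fH :: "real ^ 'r \<Rightarrow> real" and g :: "real ^ 'p \<Rightarrow> real ^ 'r"
    and X :: "nat \<Rightarrow> real ^ 'p" and n :: nat
    and J :: "nat set" and \<mu> :: "nat \<Rightarrow> real" and \<phi> :: "nat \<Rightarrow> real ^ 'r \<Rightarrow> real"
    and \<delta> :: real
  assumes rho: "prob_space \<rho>" "space \<rho> = Zs" "sets \<rho> = sets (restrict_space borel Zs)"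
    and kernel: "psd_kernel Zs K"
    and H: "rkhs Zs K H ip"
    and fH: "fH \<in> H"
    and A3: "assumption_A3 \<rho> K J \<mu> \<phi>"
    and g: "g \<in> borel_measurable (restrict_space borel Xs)" "g ` Xs \<subseteq> Zs"
    and X: "\<forall>i<n. X i \<in> Xs"
    and \<delta>: "\<delta> > 0"
  shows "rademacher_exp n (\<lambda>\<epsilon>. Sup {(1 / real n) * (\<Sum>i<n. \<epsilon> i * (f (g (X i)) - fH (g (X i)))) | f.
            f \<in> H \<and> rk_norm ip (\<lambda>z. f z - fH z) \<le> 3 * rk_norm ip fH \<and>
            (1 / real n) * (\<Sum>i<n. (f (g (X i)) - fH (g (X i)))\<^sup>2) \<le> \<delta>})
         \<le> sqrt 10 * max (rk_norm ip fH) 1 * Rhat K g X n \<delta>"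
proof -
  define M where "M = max (rk_norm ip fH) 1"
  have M1: "M \<ge> 1" by (simp add: M_def)
  define z where "z i = g (X i)" for i
  have z: "\<forall>i<n. z i \<in> Zs" using X g(2) by (auto simp: z_def)
  have Ksym: "\<forall>a\<in>Zs. \<forall>b\<in>Zs. K a b = K b a" using kernel unfolding psd_kernel_def by blast
  have Kpsd: "\<And>c. 0 \<le> (\<Sum>i<n. \<Sum>j<n. c i * c j * K (z i) (z j))"
    using kernel z unfolding psd_kernel_def by blast
  define SS where "SS \<epsilon> = {(1 / real n) * (\<Sum>i<n. \<epsilon> i * (f (g (X i)) - fH (g (X i)))) | f.
            f \<in> H \<and> rk_norm ip (\<lambda>z. f z - fH z) \<le> 3 * rk_norm ip fH \<and>
            (1 / real n) * (\<Sum>i<n. (f (g (X i)) - fH (g (X i)))\<^sup>2) \<le> \<delta>}" for \<epsilon> :: "nat \<Rightarrow> real"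
  have fHmem: "fH \<in> H \<and> rk_norm ip (\<lambda>z. fH z - fH z) \<le> 3 * rk_norm ip fH \<and>
            (1 / real n) * (\<Sum>i<n. (fH (g (X i)) - fH (g (X i)))\<^sup>2) \<le> \<delta>"
  proof -
    have "ip (\<lambda>z. 0) (\<lambda>z. 0) = 0" using rk_ip_zero[OF H rk_zero[OF H]] .
    then have "rk_norm ip (\<lambda>z. fH z - fH z) = 0" by (simp add: rk_norm_def)
    moreover have "0 \<le> rk_norm ip fH" using rk_pos[OF H fH] by (simp add: rk_norm_def)
    ultimately show ?thesis using fH \<delta> by simp
  qed
  have SSne: "SS \<epsilon> \<noteq> {}" for \<epsilon> unfolding SS_def using fHmem by blast
  show ?thesis
  proof (cases "n = 0")
    case True
    have "SS \<epsilon> = {0}" for \<epsilon> using SSne[of \<epsilon>] True unfolding SS_def by auto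
    then have "rademacher_exp n (\<lambda>\<epsilon>. Sup (SS \<epsilon>)) = 0"
      using True by (simp add: rademacher_exp_def)
    moreover have "Rhat K g X n \<delta> = 0" using True by (simp add: Rhat_def)
    ultimately show ?thesis unfolding SS_def by simp
  next
    case False
    then have npos: "real n > 0" by simp
    define A where "A i k = K (z i) (z k) / real n" for i k
    have Asym: "\<forall>i<n. \<forall>k<n. A i k = A k i" using Ksym z by (simp add: A_def)
    obtain U lam where U: "orthU n U" and AU: "\<forall>i<n. \<forall>k<n. A i k = (\<Sum>j<n. U i j * lam j * U k j)"
      using spectral[OF Asym] by blast
    have lam0: "\<forall>j<n. 0 \<le> lam j"
    proof (intro allI impI)
      fix j assume j: "j < n"
      define x where "x p = (if p = j then 1 else (0::real))" for p
      have Ux: "(\<Sum>p<n. U i p * x p) = U i j" for i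
        using sum_delta_r2[OF j, of "U i"] by (simp add: x_def)
      have "(\<Sum>i<n. \<Sum>k<n. (\<Sum>p<n. U i p * x p) * (\<Sum>q<n. U k q * x q) * A i k) = (\<Sum>j'<n. lam j' * (x j')\<^sup>2)"
        by (rule quad_form[OF U AU])
      also have "\<dots> = (\<Sum>j'<n. lam j' * (if j' = j then 1 else 0))"
        by (intro sum.cong refl) (simp add: x_def)
      also have "\<dots> = lam j" using sum_delta_r2[OF j, of lam] by simp
      finally have "lam j = (\<Sum>i<n. \<Sum>k<n. U i j * U k j * K (z i) (z k)) / real n"
        unfolding Ux A_def by (simp add: sum_divide_distrib)
      moreover have "0 \<le> (\<Sum>i<n. \<Sum>k<n. U i j * U k j * K (z i) (z k))" by (rule Kpsd)
      ultimately show "0 \<le> lam j" using npos by simp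
    qed
    define Lg where "Lg j = real n * lam j" for j
    define G where "G i k = K (z i) (z k)" for i k
    have GU: "\<forall>i<n. \<forall>k<n. G i k = (\<Sum>j<n. U i j * Lg j * U k j)"
    proof (intro allI impI)
      fix i k assume "i < n" "k < n"
      then have "G i k = real n * A i k" using npos by (simp add: G_def A_def)
      also have "\<dots> = (\<Sum>j<n. U i j * Lg j * U k j)"
        using AU \<open>i < n\<close> \<open>k < n\<close> by (simp add: Lg_def sum_distrib_left mult_ac)
      finally show "G i k = (\<Sum>j<n. U i j * Lg j * U k j)" .
    qed
    have Lg0: "\<forall>j<n. 0 \<le> Lg j" using lam0 npos by (simp add: Lg_def)
    define P where "P = 1 / (10 * real n * \<delta>)"
    define Qc where "Qc = 1 / (10 * M\<^sup>2)"
    have P: "P > 0" using npos \<delta> by (simp add: P_def)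
    have Qc: "Qc > 0" using M1 by (simp add: Qc_def)
    define \<gamma> where "\<gamma> j = Lg j / (P * Lg j + Qc)" for j
    define \<Gamma> where "\<Gamma> \<epsilon> = (\<Sum>j<n. (\<Sum>i<n. U i j * \<epsilon> i)\<^sup>2 * \<gamma> j)" for \<epsilon> :: "nat \<Rightarrow> real"
    have bound_s: "Sup (SS \<epsilon>) \<le> (1 + s\<^sup>2 * \<Gamma> \<epsilon>) / (2 * s * real n)" if s: "s > 0" for s \<epsilon>
    proof (rule cSup_least[OF SSne])
      fix x assume "x \<in> SS \<epsilon>"
      then obtain f where x: "x = (1 / real n) * (\<Sum>i<n. \<epsilon> i * (f (g (X i)) - fH (g (X i))))"
        and f: "f \<in> H" and fn: "rk_norm ip (\<lambda>z. f z - fH z) \<le> 3 * rk_norm ip fH"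
        and fd: "(1 / real n) * (\<Sum>i<n. (f (g (X i)) - fH (g (X i)))\<^sup>2) \<le> \<delta>"
        unfolding SS_def by blast
      define h where "h = (\<lambda>w. f w - fH w)"
      have h: "h \<in> H" unfolding h_def by (rule rk_diff[OF H f fH])
      define v where "v i = h (z i)" for i
      have vv: "v i = f (g (X i)) - fH (g (X i))" for i by (simp add: v_def h_def z_def)
      have Nh: "ip h h \<le> 9 * M\<^sup>2"
      proof -
        have "sqrt (ip h h) \<le> 3 * sqrt (ip fH fH)" using fn by (simp add: rk_norm_def h_def)
        moreover have "0 \<le> ip h h" by (rule rk_pos[OF H h])
        moreover have "0 \<le> ip fH fH" by (rule rk_pos[OF H fH])
        ultimately have "(sqrt (ip h h))\<^sup>2 \<le> (3 * sqrt (ip fH fH))\<^sup>2"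
          by (intro power_mono) auto
        then have "ip h h \<le> 9 * ip fH fH"
          using \<open>0 \<le> ip h h\<close> \<open>0 \<le> ip fH fH\<close> by (simp add: power_mult_distrib)
        moreover have "ip fH fH \<le> M\<^sup>2"
        proof -
          have "sqrt (ip fH fH) \<le> M" by (simp add: M_def rk_norm_def)
          then have "(sqrt (ip fH fH))\<^sup>2 \<le> M\<^sup>2" using \<open>0 \<le> ip fH fH\<close> by (intro power_mono) auto
          then show ?thesis using \<open>0 \<le> ip fH fH\<close> by simp
        qed
        ultimately show ?thesis by linarith
      qed
      have hyp: "\<forall>a. 2 * (\<Sum>i<n. a i * v i) - (\<Sum>i<n. \<Sum>k<n. a i * a k * G i k) \<le> ip h h"
      proof
        fix a
        have "(\<Sum>i<n. \<Sum>k<n. a i * a k * G i k) = (\<Sum>i<n. \<Sum>k<n. a i * a k * K (z k) (z i))"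
          using Ksym z by (intro sum.cong refl) (simp add: G_def)
        then show "2 * (\<Sum>i<n. a i * v i) - (\<Sum>i<n. \<Sum>k<n. a i * a k * G i k) \<le> ip h h"
          using rk_key[OF H z h, of a] by (simp add: v_def)
      qed
      have sv: "(\<Sum>i<n. (v i)\<^sup>2) \<le> real n * \<delta>"
        using fd npos unfolding vv[symmetric] by (simp add: field_simps)
      have tot: "P * (\<Sum>i<n. (v i)\<^sup>2) + Qc * ip h h \<le> 1"
      proof -
        have "P * (\<Sum>i<n. (v i)\<^sup>2) \<le> P * (real n * \<delta>)" using sv P by (simp add: mult_left_mono)
        also have "\<dots> = 1 / 10" using npos \<delta> by (simp add: P_def)
        finally have a1: "P * (\<Sum>i<n. (v i)\<^sup>2) \<le> 1 / 10" .
        have "Qc * ip h h \<le> Qc * (9 * M\<^sup>2)" using Nh Qc by (simp add: mult_left_mono)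
        also have "\<dots> = 9 / 10" using M1 by (simp add: Qc_def)
        finally show ?thesis using a1 by linarith
      qed
      have ki: "2 * s * (\<Sum>i<n. \<epsilon> i * v i) - s\<^sup>2 * \<Gamma> \<epsilon> \<le> 1"
        using key_ineq[OF U GU Lg0 P Qc hyp tot, of s \<epsilon>] unfolding \<Gamma>_def \<gamma>_def by simp
      have "x = (\<Sum>i<n. \<epsilon> i * v i) / real n" using x vv by simp
      also have "\<dots> \<le> (1 + s\<^sup>2 * \<Gamma> \<epsilon>) / (2 * s * real n)"
        using ki s npos by (simp add: field_simps)
      finally show "x \<le> (1 + s\<^sup>2 * \<Gamma> \<epsilon>) / (2 * s * real n)" .
    qed
    define T where "T = (\<Sum>j<n. \<gamma> j)"
    have T0: "T \<ge> 0" unfolding T_def \<gamma>_def using Lg0 P Qc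
      by (intro sum_nonneg) (simp add: add_nonneg_pos)
    have LHS_s: "\<forall>s>0. rademacher_exp n (\<lambda>\<epsilon>. Sup (SS \<epsilon>)) \<le> (1 + s\<^sup>2 * T) / (2 * s * real n)"
    proof (intro allI impI)
      fix s :: real assume s: "s > 0"
      have "rademacher_exp n (\<lambda>\<epsilon>. Sup (SS \<epsilon>))
          \<le> rademacher_exp n (\<lambda>\<epsilon>. 1 / (2 * s * real n) + (s\<^sup>2 / (2 * s * real n)) * \<Gamma> \<epsilon>)"
        using bound_s[OF s] by (intro rad_mono) (simp add: add_divide_distrib)
      also have "\<dots> = 1 / (2 * s * real n) + (s\<^sup>2 / (2 * s * real n)) * T"
        unfolding rad_affine \<Gamma>_def T_def using rad_quad[OF U, of \<gamma>] by simp
      also have "\<dots> = (1 + s\<^sup>2 * T) / (2 * s * real n)" by (simp add: add_divide_distrib)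
      finally show "rademacher_exp n (\<lambda>\<epsilon>. Sup (SS \<epsilon>)) \<le> (1 + s\<^sup>2 * T) / (2 * s * real n)" .
    qed
    have L1: "rademacher_exp n (\<lambda>\<epsilon>. Sup (SS \<epsilon>)) \<le> sqrt T / real n"
      by (rule opt_s[OF LHS_s T0 npos])
    define S where "S = (\<Sum>j<n. min \<delta> (lam j))"
    have TS: "T \<le> 10 * real n * M\<^sup>2 * S"
      unfolding T_def S_def sum_distrib_left
    proof (intro sum_mono)
      fix j assume "j \<in> {..<n}"
      then show "\<gamma> j \<le> 10 * real n * M\<^sup>2 * min \<delta> (lam j)"
        using gamma_bound[of "lam j" "real n" \<delta> M] lam0 npos \<delta> M1
        unfolding \<gamma>_def Lg_def P_def Qc_def by simp
    qed
    have gm: "gram_mat K g X n = Matrix.mat n n (\<lambda>(i,k). A i k)"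
      unfolding gram_mat_def A_def z_def by simp
    have SR: "(\<Sum>j<n. min \<delta> (sorted_eigs (gram_mat K g X n) ! j)) = S"
      unfolding gm S_def by (rule sorted_eigs_sum[OF U AU])
    have Rh: "Rhat K g X n \<delta> = sqrt (S / real n)"
      unfolding Rhat_def SR by simp
    have S0: "S \<ge> 0" unfolding S_def using lam0 \<delta> by (intro sum_nonneg) simp
    have "sqrt T / real n \<le> sqrt (10 * real n * M\<^sup>2 * S) / real n"
      using TS npos by (simp add: divide_right_mono)
    also have "\<dots> = sqrt 10 * M * sqrt (S / real n)"
    proof -
      have "sqrt (10 * real n * M\<^sup>2 * S) = sqrt 10 * M * sqrt (real n * S)"
        using M1 by (simp add: real_sqrt_mult)
      moreover have "sqrt (real n * S) / real n = sqrt (S / real n)"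
      proof -
        have "S / real n = (real n * S) / (real n)\<^sup>2" using npos by (simp add: power2_eq_square)
        then show ?thesis by (simp add: real_sqrt_divide)
      qed
      moreover have "sqrt 10 * (M * sqrt (real n * S)) / real n = sqrt 10 * (M * (sqrt (real n * S) / real n))"
        by simp
      ultimately show ?thesis by (simp add: mult.assoc)
    qed
    finally have "rademacher_exp n (\<lambda>\<epsilon>. Sup (SS \<epsilon>)) \<le> sqrt 10 * max (rk_norm ip fH) 1 * Rhat K g X n \<delta>"
      using L1 Rh unfolding M_def by simp
    then show ?thesis unfolding SS_def .
  qed
qed

end
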